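(* Let $k\geq1$ be an integer and let $\psi\in\Psi_{2k+2}$. For $d\in\{2,2k+2\}$ let $b_{n,d}$ denote the $d$-dimensional Schoenberg coefficients of $\psi$; in particular $b_{n,2}$ are its Legendre coefficients, i.e. $\psi(\theta)=\sum_{n\ge0}b_{n,2}P_n(\cos\theta)$. Then for every integer $n\ge0$, \[ b_{n,2k+2}=\sum_{i=0}^k u_i(n,k)\,b_{n+2i,2}, \] where \[ u_i(n,k)=(-1)^i\frac{(2k-1)!!}{2^k}\binom{k}{i}\binom{2k+n}{n}\frac{1}{(n+i+1/2)_{(k-i)}\,(n+k+3/2)_{(i)}}. \]
   Context: For an integer $d\ge1$, $\mathbb{S}^d=\{x\in\mathbb{R}^{d+1}:\|x\|=1\}$ and $\theta(x,y)=\arccos(\langle x,y\rangle)$ is the great circle distance. $\Psi_d$ denotes the class of continuous functions $\psi:[0,\pi]\to\mathbb{R}$ with $\psi(0)=1$ such that $(x,y)\mapsto\psi(\theta(x,y))$ is positive definite on $\mathbb{S}^d$, i.e. $\sum_{i,j=1}^m c_ic_j\psi(\theta(x_i,x_j))\ge0$ for all $m\ge1$, all real $c_1,\dots,c_m$ and all distinct $x_1,\dots,x_m\in\mathbb{S}^d$. One has $\Psi_1\supset\Psi_2\supset\cdots$, and (Schoenberg) $\psi\in\Psi_d$ iff $\psi(\theta)=\sum_{n=0}^\infty b_{n,d}\,\frac{C_n^{(d-1)/2}(\cos\theta)}{C_n^{(d-1)/2}(1)}$ for unique coefficients $b_{n,d}\ge0$ with $\sum_n b_{n,d}=1$; these $b_{n,d}$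 are the $d$-dimensional Schoenberg coefficients of $\psi$. Here $C_n^\lambda$ are Gegenbauer polynomials, and $C_n^{1/2}=P_n$ are the Legendre polynomials (with $P_n(1)=1$). Notation: $(2k-1)!!=\prod_{j=1}^k(2j-1)$, and $(x)_{(m)}=x(x+1)\cdots(x+m-1)$ is the Pochhammer symbol (with $(x)_{(0)}=1$). *)

theory Defs
  imports "HOL-Analysis.Analysis"
begin

definition sphere_pts :: "nat \<Rightarrow> (nat \<Rightarrow> real) set" where
  "sphere_pts d = {x. (\<forall>i>d. x i = 0) \<and> (\<Sum>i\<le>d. (x i)\<^sup>2) = 1}"

definition gc_dist :: "nat \<Rightarrow> (nat \<Rightarrow> real) \<Rightarrow> (nat \<Rightarrow> real) \<Rightarrow> real" where
  "gc_dist d x y = arccos (\<Sum>i\<le>d. x i * y i)"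

definition Psi :: "nat \<Rightarrow> (real \<Rightarrow> real) set" where
  "Psi d = {\<psi>. continuous_on {0..pi} \<psi> \<and> \<psi> 0 = 1 \<and>
     (\<forall>(m::nat) (c::nat \<Rightarrow> real) (X::nat \<Rightarrow> nat \<Rightarrow> real).
        m \<ge> 1 \<and> (\<forall>i<m. X i \<in> sphere_pts d) \<and> inj_on X {..<m} \<longrightarrow>
        (\<Sum>i<m. \<Sum>j<m. c i * c j * \<psi> (gc_dist d (X i) (X j))) \<ge> 0)}"

definition gegenbauer :: "real \<Rightarrow> nat \<Rightarrow> real \<Rightarrow> real" where
  "gegenbauer lam n x = (\<Sum>j\<le>n div 2. (-1)^j * pochhammer lam (n - j)
       / (fact j * fact (n - 2*j)) * (2*x)^(n - 2*j))"

definition norm_gegenbauer :: "nat \<Rightarrow> nat \<Rightarrow> real \<Rightarrow> real" where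
  "norm_gegenbauer d n x =
     gegenbauer ((real d - 1) / 2) n x / gegenbauer ((real d - 1) / 2) n 1"

definition schoenberg_coeffs :: "nat \<Rightarrow> (real \<Rightarrow> real) \<Rightarrow> (nat \<Rightarrow> real) \<Rightarrow> bool" where
  "schoenberg_coeffs d \<psi> b \<longleftrightarrow> (\<forall>n. b n \<ge> 0) \<and> b sums 1 \<and>
     (\<forall>\<theta>\<in>{0..pi}. (\<lambda>n. b n * norm_gegenbauer d n (cos \<theta>)) sums \<psi> \<theta>)"

definition odd_dfact :: "nat \<Rightarrow> real" where
  "odd_dfact k = (\<Prod>j=1..k. 2 * real j - 1)"

definition u_coeff :: "nat \<Rightarrow> nat \<Rightarrow> nat \<Rightarrow> real" where
  "u_coeff i n k = (-1)^i * odd_dfact k / 2^k * real (k choose i) * real ((2*k+n) choose n)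
      / (pochhammer (real n + real i + 1/2) (k - i) * pochhammer (real n + real k + 3/2) i)"

end

theory Submission
  imports Defs "HOL-Computational_Algebra.Polynomial"
begin


definition gc :: "real \<Rightarrow> nat \<Rightarrow> nat \<Rightarrow> real" where
 "gc l n m = (if m \<le> n \<and> even (n - m) then (-1)^((n-m) div 2) * pochhammer l (n - (n-m) div 2) * 2^m
     / (fact ((n-m) div 2) * fact m) else 0)"

definition GP :: "real \<Rightarrow> nat \<Rightarrow> real poly" where
 "GP l n = (\<Sum>m\<le>n. monom (gc l n m) m)"

lemma gc_gt: "n < m \<Longrightarrow> gc l n m = 0" by (simp add: gc_def)

lemma gc_jm: "gc l (m + 2*j) m = (-1)^j * pochhammer l (m + j) * 2^m / (fact j * fact m)"
proof -
  have "m + 2*j - (m + 2*j - m) div 2 = m + j" by simp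
  then show ?thesis by (simp add: gc_def add.commute)
qed

lemma gc_odd: "odd (n - m) \<Longrightarrow> gc l n m = 0" by (simp add: gc_def)

lemma coeff_GP: "coeff (GP l n) m = gc l n m"
  by (simp add: GP_def coeff_sum coeff_monom gc_gt)

lemma gegenbauer_poly: "gegenbauer l n x = poly (GP l n) x"
proof -
  have "poly (GP l n) x = (\<Sum>m\<le>n. gc l n m * x^m)"
    by (simp add: GP_def poly_sum poly_monom)
  also have "\<dots> = (\<Sum>m\<in>(\<lambda>j. n - 2*j) ` {..n div 2}. gc l n m * x^m)"
  proof (rule sum.mono_neutral_right)
    show "(\<lambda>j. n - 2*j) ` {..n div 2} \<subseteq> {..n}" by auto
    show "\<forall>i\<in>{..n} - (\<lambda>j. n - 2 * j) ` {..n div 2}. gc l n i * x ^ i = 0"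
    proof
      fix i assume i: "i \<in> {..n} - (\<lambda>j. n - 2 * j) ` {..n div 2}"
      have "odd (n - i)"
      proof
        assume "even (n - i)"
        then obtain j where "n - i = 2*j" by blast
        moreover have "j \<le> n div 2" "i = n - 2*j" using i \<open>n - i = 2*j\<close> by auto
        ultimately show False using i by blast
      qed
      then show "gc l n i * x ^ i = 0" by (simp add: gc_odd)
    qed
  qed simp
  also have "\<dots> = (\<Sum>j\<le>n div 2. gc l n (n - 2*j) * x^(n - 2*j))"
    by (rule sum.reindex_cong[of "\<lambda>j. n - 2*j"]) (auto simp: inj_on_def)
  also have "\<dots> = gegenbauer l n x"
    unfolding gegenbauer_def
  proof (rule sum.cong)
    fix j assume "j \<in> {..n div 2}"
    then have j: "2*j \<le> n" by auto
    then obtain m where m: "n = m + 2*j" by (metis le_add_diff_inverse2)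
    show "gc l n (n - 2*j) * x^(n - 2*j) = (-1)^j * pochhammer l (n - j) / (fact j * fact (n - 2*j)) * (2*x)^(n - 2*j)"
      by (simp add: m gc_jm power_mult_distrib add.commute)
  qed simp
  finally show ?thesis ..
qed



lemma gc_ode: "real ((m+2)*(m+1)) * gc l n (m+2) = (real m * (real m + 2*l) - real n * (real n + 2*l)) * gc l n m"
proof (cases "m \<le> n \<and> even (n - m)")
  case True
  then obtain j where n: "n = m + 2*j" by (metis dvd_def le_add_diff_inverse)
  show ?thesis
  proof (cases j)
    case 0 then show ?thesis by (simp add: n gc_gt)
  next
    case (Suc i)
    have n2: "n = (m+2) + 2*i" using n Suc by simp
    have p: "pochhammer l (m + 2 + i) = (l + real (m+i+1)) * pochhammer l (m + i + 1)"
      using pochhammer_rec'[of l "m+i+1"] by (simp add: add_ac)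
    have e1: "gc l n (m+2) = (-1)^i * pochhammer l (m+2+i) * 2^(m+2) / (fact i * fact (m+2))"
      unfolding n2 gc_jm ..
    have e2: "gc l n m = (-1)^(Suc i) * pochhammer l (m+i+1) * 2^m / (fact (Suc i) * fact m)"
      unfolding n Suc gc_jm by (simp add: add_ac)
    define B where "B = (-1)^i * pochhammer l (m+i+1) * 2^m / (fact i * fact m)"
    have f1: "fact (m+2) = real ((m+2)*(m+1)) * fact m" by (simp add: fact_Suc algebra_simps)
    have f2: "fact (Suc i) = real (Suc i) * fact i" by (simp add: fact_Suc)
    have e1': "gc l n (m+2) = 4 * (l + real (m+i+1)) * B / real ((m+2)*(m+1))"
      unfolding e1 p B_def f1 by (simp add: field_simps power_add)
    have e2': "gc l n m = - B / real (Suc i)"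
      unfolding e2 B_def f2 by (simp add: field_simps)
    have fac: "real m * (real m + 2*l) - real n * (real n + 2*l) = - 4 * real (Suc i) * (l + real (m+i+1))"
      unfolding n Suc by (simp add: algebra_simps)
    have X: "real ((m+2)*(m+1)) \<noteq> 0" by (simp only: of_nat_eq_0_iff) simp
    have L: "real ((m+2)*(m+1)) * gc l n (m+2) = 4 * (l + real (m+i+1)) * B"
      unfolding e1' using X by (metis nonzero_mult_div_cancel_left times_divide_eq_right)
    have R: "(- 4 * real (Suc i) * (l + real (m+i+1))) * (- B / real (Suc i)) = 4 * (l + real (m+i+1)) * B"
      by (simp add: field_simps)
    show ?thesis unfolding L e2' fac R ..
  qed
next
  case False
  then have "gc l n m = 0" by (auto simp: gc_def)
  moreover have "gc l n (m+2) = 0" using False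
    by (auto simp: gc_def)
  ultimately show ?thesis by simp
qed

lemma cancel_aux: "(s::real) \<noteq> 0 \<Longrightarrow> s * (X / (F * (s * G))) = X / (F * G)"
  by (simp add: field_simps)

lemma gc_deriv: "real (Suc m) * gc l (Suc n) (Suc m) = 2*l * gc (l+1) n m"
proof (cases "m \<le> n \<and> even (n - m)")
  case True
  then obtain j where n: "n = m + 2*j" by (metis dvd_def le_add_diff_inverse)
  have a: "gc l (Suc n) (Suc m) = (-1)^j * pochhammer l (Suc m + j) * 2^(Suc m) / (fact j * fact (Suc m))"
    unfolding n using gc_jm[of l "Suc m" j] by simp
  have b: "gc (l+1) n m = (-1)^j * pochhammer (l+1) (m + j) * 2^m / (fact j * fact m)"
    unfolding n gc_jm ..
  have f1: "fact (Suc m) = real (Suc m) * fact m" by (simp add: fact_Suc)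
  have fp: "fact j > (0::real)" "fact m > (0::real)" by auto
  have "real (Suc m) * gc l (Suc n) (Suc m) = (-1)^j * pochhammer l (Suc m + j) * 2^(Suc m) / (fact j * fact m)"
    unfolding a f1 using cancel_aux[of "real (Suc m)"] by simp
  then show ?thesis unfolding b using fp by (simp add: pochhammer_rec field_simps)
next
  case False
  then show ?thesis by (auto simp: gc_def)
qed

lemma gc_lower: "(real n + l) * gc l n m = l * (gc (l+1) n m - (if 2 \<le> n then gc (l+1) (n-2) m else 0))"
proof (cases "m \<le> n \<and> even (n - m)")
  case True
  then obtain j where n: "n = m + 2*j" by (metis dvd_def le_add_diff_inverse)
  show ?thesis
  proof (cases j)
    case 0
    have z: "2 \<le> n \<Longrightarrow> gc (l+1) (n-2) m = 0" using n 0 by (simp add: gc_gt)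
    have "(real m + l) * pochhammer l m = l * pochhammer (l+1) m"
      using pochhammer_rec'[of l m] pochhammer_rec[of l m] by (simp add: add_ac)
    moreover have "gc l n m = pochhammer l m * 2^m / fact m" "gc (l+1) n m = pochhammer (l+1) m * 2^m / fact m"
      using n 0 gc_jm[of l m 0] gc_jm[of "l+1" m 0] by simp_all
    ultimately have "(real n + l) * gc l n m = l * gc (l+1) n m" using n 0
      by (simp add: add.commute)
    then show ?thesis using z n 0 by simp
  next
    case (Suc i)
    have n2: "n - 2 = m + 2*i" "2 \<le> n" using n Suc by auto
    have a: "gc l n m = (-1)^(Suc i) * pochhammer l (m + Suc i) * 2^m / (fact (Suc i) * fact m)"
      unfolding n Suc gc_jm ..
    have b: "gc (l+1) n m = (-1)^(Suc i) * pochhammer (l+1) (m + Suc i) * 2^m / (fact (Suc i) * fact m)"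
      unfolding n Suc gc_jm ..
    have c: "gc (l+1) (n-2) m = (-1)^i * pochhammer (l+1) (m + i) * 2^m / (fact i * fact m)"
      unfolding n2 gc_jm ..
    have p1: "pochhammer l (m + Suc i) = l * pochhammer (l+1) (m+i)"
      using pochhammer_rec[of l "m+i"] by simp
    have p2: "pochhammer (l+1) (m + Suc i) = (l + 1 + real (m+i)) * pochhammer (l+1) (m+i)"
      using pochhammer_rec'[of "l+1" "m+i"] by simp
    define B where "B = (-1)^i * pochhammer (l+1) (m+i) * 2^m / (fact i * fact m)"
    have f2: "fact (Suc i) = real (Suc i) * fact i" by (simp add: fact_Suc)
    have a': "gc l n m = - l * B / real (Suc i)" unfolding a p1 B_def f2 by (simp add: field_simps)
    have b': "gc (l+1) n m = - (l + 1 + real (m+i)) * B / real (Suc i)" unfolding b p2 B_def f2 by (simp add: field_simps)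
    have c': "gc (l+1) (n-2) m = B" unfolding c B_def ..
    have nn: "real n = real m + 2 * real i + 2" unfolding n Suc by simp
    show ?thesis unfolding a' b' c' nn using n2(2) by (simp add: field_simps)
  qed
next
  case False
  then have "gc l n m = 0" "gc (l+1) n m = 0" by (auto simp: gc_def)
  moreover have "2 \<le> n \<Longrightarrow> gc (l+1) (n-2) m = 0" using False
    by (auto simp: gc_def)
  ultimately show ?thesis by simp
qed



lemma pderiv_GP_Suc: "pderiv (GP l (Suc n)) = smult (2*l) (GP (l+1) n)"
  by (rule poly_eqI) (metis coeff_pderiv coeff_GP coeff_smult gc_deriv)

lemma GP_0: "GP l 0 = 1"
  by (simp add: GP_def gc_def)

lemma ode_poly:
  shows "pderiv (pderiv (GP l n)) - pCons 0 (pCons 0 (pderiv (pderiv (GP l n)))) - smult (2*l+1) (pCons 0 (pderiv (GP l n)))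
     + smult (real n * (real n + 2*l)) (GP l n) = 0"
proof (rule poly_eqI)
  fix m
  have o: "real ((m+2)*(m+1)) * gc l n (m+2) = (real m * (real m + 2*l) - real n * (real n + 2*l)) * gc l n m"
    by (rule gc_ode)
  show "coeff (pderiv (pderiv (GP l n)) - pCons 0 (pCons 0 (pderiv (pderiv (GP l n)))) - smult (2*l+1) (pCons 0 (pderiv (GP l n)))
     + smult (real n * (real n + 2*l)) (GP l n)) m = coeff 0 m"
  proof (cases m)
    case 0 then show ?thesis using o by (simp add: coeff_pderiv coeff_GP algebra_simps numeral_2_eq_2)
  next
    case (Suc m1) note m1 = Suc
    show ?thesis
    proof (cases m1)
      case 0 then show ?thesis using o m1 by (simp add: coeff_pderiv coeff_GP algebra_simps numeral_2_eq_2 numeral_3_eq_3)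
    next
      case (Suc m2)
      then show ?thesis using o m1 by (simp add: coeff_pderiv coeff_GP algebra_simps numeral_2_eq_2)
    qed
  qed
qed

lemma ode_point:
  "(1 - x^2) * poly (pderiv (pderiv (GP l n))) x - (2*l+1) * x * poly (pderiv (GP l n)) x
     + real n * (real n + 2*l) * poly (GP l n) x = 0"
proof -
  have "poly (pderiv (pderiv (GP l n)) - pCons 0 (pCons 0 (pderiv (pderiv (GP l n)))) - smult (2*l+1) (pCons 0 (pderiv (GP l n)))
     + smult (real n * (real n + 2*l)) (GP l n)) x = 0"
    using ode_poly[of l n] by simp
  then show ?thesis by (simp add: algebra_simps power2_eq_square)
qed



lemma GP_at_1: "l > 0 \<Longrightarrow> poly (GP l n) 1 = pochhammer (2*l) n / fact n"
proof (induction n arbitrary: l)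
  case 0 then show ?case by (simp add: GP_0)
next
  case (Suc n)
  have ih: "poly (GP (l+1) n) 1 = pochhammer (2*l+2) n / fact n"
    using Suc.IH[of "l+1"] Suc.prems by (simp add: algebra_simps)
  have o: "- (2*l+1) * poly (pderiv (GP l (Suc n))) 1 + real (Suc n) * (real (Suc n) + 2*l) * poly (GP l (Suc n)) 1 = 0"
    using ode_point[of 1 l "Suc n"] by (simp add: algebra_simps)
  have d: "poly (pderiv (GP l (Suc n))) 1 = 2*l * (pochhammer (2*l+2) n / fact n)"
    by (simp add: pderiv_GP_Suc ih)
  have pz: "real (Suc n) * (real (Suc n) + 2*l) \<noteq> 0" using Suc.prems by (simp add: add_pos_pos)
  have v: "poly (GP l (Suc n)) 1 = (2*l+1) * (2*l * (pochhammer (2*l+2) n / fact n)) / (real (Suc n) * (real (Suc n) + 2*l))"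
  proof -
    have e: "real (Suc n) * (real (Suc n) + 2*l) * poly (GP l (Suc n)) 1 = (2*l+1) * (2*l * (pochhammer (2*l+2) n / fact n))"
      using o unfolding d by linarith
    show ?thesis using pz e by (simp add: eq_divide_eq ac_simps)
  qed
  have p1: "pochhammer (2*l) (Suc (Suc n)) = 2*l * ((2*l+1) * pochhammer (2*l+2) n)"
    by (simp add: pochhammer_rec algebra_simps)
  have p2: "pochhammer (2*l) (Suc (Suc n)) = (2*l + real (Suc n)) * pochhammer (2*l) (Suc n)"
    by (rule pochhammer_rec')
  have p3: "pochhammer (2*l) (Suc n) = 2*l * ((2*l+1) * pochhammer (2*l+2) n) / (2*l + real (Suc n))"
    using p1 p2 Suc.prems by (simp add: field_simps add_pos_pos)
  show ?case unfolding v p3 using Suc.prems by (simp add: fact_Suc field_simps)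
qed

lemma GP_at_1_pos: "l > 0 \<Longrightarrow> poly (GP l n) 1 > 0"
  using GP_at_1[of l n] by (simp add: pochhammer_pos)

lemma GP_parity: "poly (GP l n) (-x) = (-1)^n * poly (GP l n) x"
proof -
  have "gegenbauer l n (-x) = (-1)^n * gegenbauer l n x"
    unfolding gegenbauer_def sum_distrib_left
  proof (rule sum.cong)
    fix j assume "j \<in> {..n div 2}"
    then have j: "2*j \<le> n" by auto
    have "(2 * - x) ^ (n - 2 * j) = (-1)^(n - 2*j) * (2*x)^(n-2*j)"
      by (metis mult.commute mult_minus_left power_minus)
    moreover have "(-1::real)^(n - 2*j) = (-1)^n"
    proof -
      obtain m where m: "n = m + 2*j" using j by (metis le_add_diff_inverse2)
      show ?thesis by (simp add: m power_add power_mult)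
    qed
    ultimately show "(-1)^j * pochhammer l (n - j) / (fact j * fact (n - 2*j)) * (2 * - x) ^ (n - 2*j) =
      (-1)^n * ((-1)^j * pochhammer l (n - j) / (fact j * fact (n - 2*j)) * (2*x) ^ (n - 2*j))"
      by simp
  qed simp
  then show ?thesis by (simp add: gegenbauer_poly)
qed

lemma GP_lower: "(real n + l) * poly (GP l n) x = l * (poly (GP (l+1) n) x - (if 2 \<le> n then poly (GP (l+1) (n-2)) x else 0))"
proof -
  have "smult (real n + l) (GP l n) = smult l (GP (l+1) n - (if 2 \<le> n then GP (l+1) (n-2) else 0))"
    by (rule poly_eqI) (simp add: coeff_GP gc_lower)
  then have "poly (smult (real n + l) (GP l n)) x = poly (smult l (GP (l+1) n - (if 2 \<le> n then GP (l+1) (n-2) else 0))) x"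
    by simp
  then show ?thesis by (simp split: if_splits)
qed



lemma GP_bound_pos:
  assumes l: "l > 0" and x: "0 \<le> x" "x \<le> 1"
  shows "\<bar>poly (GP l n) x\<bar> \<le> poly (GP l n) 1"
proof (cases n)
  case 0 then show ?thesis by (simp add: GP_0)
next
  case (Suc n')
  define L where "L = real n * (real n + 2*l)"
  have Lp: "L > 0" unfolding L_def using l Suc by (simp add: add_pos_pos)
  define Y where "Y = (\<lambda>t. poly (GP l n) t)"
  define Y1 where "Y1 = (\<lambda>t. poly (pderiv (GP l n)) t)"
  define Y2 where "Y2 = (\<lambda>t. poly (pderiv (pderiv (GP l n))) t)"
  define c where "c = 1 / L"
  define f where "f = (\<lambda>t. Y t ^ 2 + c * ((1 - t^2) * Y1 t ^ 2))"
  have der0: "DERIV f t :> 2 * Y t * Y1 t + c * ((- 2 * t) * Y1 t ^ 2 + (1 - t^2) * (2 * Y1 t * Y2 t))" for t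
    unfolding f_def Y_def Y1_def Y2_def
    by (auto intro!: derivative_eq_intros simp: algebra_simps power2_eq_square)
  have der: "DERIV f t :> 2 * Y t * Y1 t + ((- 2 * t) * Y1 t ^ 2 + (1 - t^2) * (2 * Y1 t * Y2 t)) / L" for t
    using der0[of t] unfolding c_def by simp
  have dnn: "2 * Y t * Y1 t + ((- 2 * t) * Y1 t ^ 2 + (1 - t^2) * (2 * Y1 t * Y2 t)) / L \<ge> 0" if "t \<ge> 0" for t
  proof -
    have o: "(1 - t^2) * Y2 t = (2*l+1) * t * Y1 t - L * Y t"
      using ode_point[of t l n] unfolding Y_def Y1_def Y2_def L_def by (simp add: algebra_simps)
    have "(1 - t^2) * (2 * Y1 t * Y2 t) = 2 * Y1 t * ((1 - t^2) * Y2 t)" by (simp add: algebra_simps)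
    also have "\<dots> = 2 * Y1 t * ((2*l+1) * t * Y1 t - L * Y t)" by (simp add: o)
    finally have e: "2 * Y t * Y1 t + ((- 2 * t) * Y1 t ^ 2 + (1 - t^2) * (2 * Y1 t * Y2 t)) / L
        = 4 * l * t * Y1 t ^ 2 / L"
      using Lp by (simp add: field_simps power2_eq_square)
    show ?thesis unfolding e using l that Lp by simp
  qed
  have "f x \<le> f 1"
  proof (rule DERIV_nonneg_imp_increasing_open[OF x(2)])
    fix t assume "x < t" "t < 1"
    then have "t \<ge> 0" using x by simp
    then show "\<exists>y. DERIV f t :> y \<and> 0 \<le> y" using der[of t] dnn[of t] by blast
  next
    show "continuous_on {x..1} f" unfolding f_def Y_def Y1_def by (intro continuous_intros)
  qed
  moreover have "Y x ^ 2 \<le> f x" unfolding f_def c_def using x Lp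
    by (simp add: abs_square_le_1 power_le_one)
  moreover have "f 1 = Y 1 ^ 2" unfolding f_def by simp
  ultimately have "Y x ^ 2 \<le> Y 1 ^ 2" by simp
  then have "\<bar>Y x\<bar> \<le> \<bar>Y 1\<bar>" using abs_le_square_iff by blast
  then show ?thesis unfolding Y_def using GP_at_1_pos[OF l, of n] by simp
qed

lemma GP_bound:
  assumes l: "l > 0" and x: "-1 \<le> x" "x \<le> 1"
  shows "\<bar>poly (GP l n) x\<bar> \<le> poly (GP l n) 1"
proof (cases "x \<ge> 0")
  case True then show ?thesis using GP_bound_pos[OF l True x(2)] by simp
next
  case False
  have "\<bar>poly (GP l n) x\<bar> = \<bar>poly (GP l n) (-x)\<bar>" using GP_parity[of l n "-x"] by (simp add: abs_mult)
  also have "\<dots> \<le> poly (GP l n) 1" using GP_bound_pos[OF l, of "-x"] False x by simp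
  finally show ?thesis .
qed



lemma GP_orth:
  assumes mn: "m \<noteq> n"
  shows "((\<lambda>x. (1 - x^2)^k * poly (GP (real k + 1/2) m) x * poly (GP (real k + 1/2) n) x) has_integral 0) {-1..1}"
proof -
  define l :: real where "l = real k + 1/2"
  define Ym where "Ym = (\<lambda>t. poly (GP l m) t)"
  define Ym1 where "Ym1 = (\<lambda>t. poly (pderiv (GP l m)) t)"
  define Ym2 where "Ym2 = (\<lambda>t. poly (pderiv (pderiv (GP l m))) t)"
  define Yn where "Yn = (\<lambda>t. poly (GP l n) t)"
  define Yn1 where "Yn1 = (\<lambda>t. poly (pderiv (GP l n)) t)"
  define Yn2 where "Yn2 = (\<lambda>t. poly (pderiv (pderiv (GP l n))) t)"
  define Lm where "Lm = real m * (real m + 2*l)"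
  define Ln where "Ln = real n * (real n + 2*l)"
  define F where "F = (\<lambda>t::real. (1 - t^2)^(k+1) * (Ym1 t * Yn t - Yn1 t * Ym t))"
  have der0: "DERIV F t :> (real (k+1) * (1 - t^2)^k * (- 2 * t)) * (Ym1 t * Yn t - Yn1 t * Ym t)
      + (1 - t^2)^(k+1) * ((Ym2 t * Yn t + Ym1 t * Yn1 t) - (Yn2 t * Ym t + Yn1 t * Ym1 t))" for t
  proof -
    have d1: "DERIV (\<lambda>t. 1 - t^2) t :> - 2 * t"
      by (auto intro!: derivative_eq_intros)
    have dp: "DERIV (\<lambda>t. (1 - t^2)^(k+1)) t :> real (k+1) * (1 - t^2)^k * (- 2 * t)"
      using DERIV_power[OF d1, of "k+1"] by (simp add: mult_ac)
    have dq: "DERIV (\<lambda>t. Ym1 t * Yn t - Yn1 t * Ym t) t :> (Ym2 t * Yn t + Ym1 t * Yn1 t) - (Yn2 t * Ym t + Yn1 t * Ym1 t)"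
      unfolding Ym_def Ym1_def Ym2_def Yn_def Yn1_def Yn2_def
      by (auto intro!: derivative_eq_intros simp: algebra_simps)
    show ?thesis unfolding F_def using DERIV_mult[OF dp dq] by (simp add: algebra_simps)
  qed
  have val: "(real (k+1) * (1 - t^2)^k * (- 2 * t)) * (Ym1 t * Yn t - Yn1 t * Ym t)
      + (1 - t^2)^(k+1) * ((Ym2 t * Yn t + Ym1 t * Yn1 t) - (Yn2 t * Ym t + Yn1 t * Ym1 t))
      = (Ln - Lm) * ((1 - t^2)^k * Ym t * Yn t)" for t
  proof -
    have om: "(1 - t^2) * Ym2 t = (2*l+1) * t * Ym1 t - Lm * Ym t"
      using ode_point[of t l m] unfolding Ym_def Ym1_def Ym2_def Lm_def by (simp add: algebra_simps)
    have on: "(1 - t^2) * Yn2 t = (2*l+1) * t * Yn1 t - Ln * Yn t"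
      using ode_point[of t l n] unfolding Yn_def Yn1_def Yn2_def Ln_def by (simp add: algebra_simps)
    have l2: "2*l+1 = 2 * real (k+1)" unfolding l_def by simp
    have "(1 - t^2)^(k+1) * ((Ym2 t * Yn t + Ym1 t * Yn1 t) - (Yn2 t * Ym t + Yn1 t * Ym1 t))
        = (1 - t^2)^k * (((1 - t^2) * Ym2 t) * Yn t - ((1 - t^2) * Yn2 t) * Ym t)"
      by (simp add: algebra_simps)
    also have "\<dots> = (1 - t^2)^k * (((2*l+1) * t * Ym1 t - Lm * Ym t) * Yn t - ((2*l+1) * t * Yn1 t - Ln * Yn t) * Ym t)"
      by (simp only: om on)
    finally show ?thesis unfolding l2 by (simp add: algebra_simps)
  qed
  have "((\<lambda>t. (Ln - Lm) * ((1 - t^2)^k * Ym t * Yn t)) has_integral (F 1 - F (-1))) {-1..1}"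
  proof (rule fundamental_theorem_of_calculus)
    fix x :: real assume "x \<in> {-1..1}"
    have "DERIV F x :> (Ln - Lm) * ((1 - x^2)^k * Ym x * Yn x)" using der0[of x] unfolding val .
    then have "(F has_real_derivative (Ln - Lm) * ((1 - x^2)^k * Ym x * Yn x)) (at x within {-1..1})"
      by (rule has_field_derivative_at_within)
    then show "(F has_vector_derivative (Ln - Lm) * ((1 - x^2)^k * Ym x * Yn x)) (at x within {-1..1})"
      by (simp add: has_real_derivative_iff_has_vector_derivative)
  qed simp
  then have i: "((\<lambda>t. (Ln - Lm) * ((1 - t^2)^k * Ym t * Yn t)) has_integral 0) {-1..1}"
    unfolding F_def by simp
  have "Ln \<noteq> Lm"
  proof
    assume "Ln = Lm"
    then have "(real n - real m) * (real n + real m + 2*l) = 0" unfolding Ln_def Lm_def by (simp add: algebra_simps)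
    moreover have "real n + real m + 2*l > 0" unfolding l_def by simp
    ultimately show False using mn by simp
  qed
  then have "((\<lambda>t. inverse (Ln - Lm) * ((Ln - Lm) * ((1 - t^2)^k * Ym t * Yn t))) has_integral inverse (Ln - Lm) * 0) {-1..1}"
    using has_integral_mult_right[OF i] by blast
  moreover have "(\<lambda>t. inverse (Ln - Lm) * ((Ln - Lm) * ((1 - t^2)^k * Ym t * Yn t))) = (\<lambda>t. (1 - t^2)^k * Ym t * Yn t)"
    using \<open>Ln \<noteq> Lm\<close> by (simp add: mult.assoc[symmetric])
  ultimately show ?thesis unfolding Ym_def Yn_def l_def by simp
qed



lemma GP_norm_nz:
  assumes l: "l > 0"
  shows "integral {-1..1} (\<lambda>x. (1 - x^2)^k * poly (GP l M) x * poly (GP l M) x) \<noteq> 0"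
proof
  define f where "f = (\<lambda>x::real. (1 - x^2)^k * poly (GP l M) x * poly (GP l M) x)"
  assume "integral {-1..1} (\<lambda>x. (1 - x^2)^k * poly (GP l M) x * poly (GP l M) x) = 0"
  then have i0: "integral {-1..1} f = 0" unfolding f_def .
  have cf: "continuous_on {-1..1} f" unfolding f_def by (intro continuous_intros)
  have "(f has_integral integral {-1..1} f) {-1..1}"
    using integrable_continuous_real[OF cf] by (rule integrable_integral)
  then have hi: "(f has_integral 0) (cbox (-1) 1)" using i0 by simp
  have roots: "{-1<..<1} \<subseteq> {x. poly (GP l M) x = 0}"
  proof
    fix x :: real assume x: "x \<in> {-1<..<1}"
    have nn: "0 \<le> f y" if "y \<in> box (-1) 1" for y
    proof -
      have "\<bar>y\<bar> \<le> 1" using that by (auto simp: box_real)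
      then have "0 \<le> 1 - y^2" by (simp add: abs_square_le_1)
      then show ?thesis unfolding f_def by (simp add: mult.assoc)
    qed
    have "f x = 0"
      by (rule has_integral_0_cbox_imp_0[OF _ nn hi]) (use cf x in \<open>auto simp: box_real cbox_interval\<close>)
    moreover have "(1 - x^2)^k \<noteq> 0"
    proof -
      have "\<bar>x\<bar> < 1" using x by auto
      then have "x^2 < 1" by (simp add: abs_square_less_1)
      then show ?thesis by simp
    qed
    ultimately show "x \<in> {x. poly (GP l M) x = 0}" unfolding f_def by auto
  qed
  have "GP l M \<noteq> 0" using GP_at_1_pos[OF l, of M] by auto
  then have "finite {x. poly (GP l M) x = 0}" by (rule poly_roots_finite)
  then have "finite {-1<..<(1::real)}" using roots finite_subset by blast
  then show False using infinite_Ioo[of "-1" "1::real"] by simp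
qed



definition V :: "nat \<Rightarrow> nat \<Rightarrow> nat \<Rightarrow> real" where
"V k N i = (-1)^i * real (k choose i) * pochhammer (1/2) k * (real N + real k - 2 * real i + 1/2)
    / pochhammer (real N - real i + 1/2) (k+1)"

lemma binom_rel: "real (Suc j) * real (k choose Suc j) = (real k - real j) * real (k choose j)"
proof (cases "j \<le> k")
  case True
  have "Suc j * (k choose Suc j) = (k - j) * (k choose j)"
    using binomial_absorption[of j k] binomial_absorb_comp[of k j] by simp
  then have "real (Suc j * (k choose Suc j)) = real ((k - j) * (k choose j))" by simp
  then show ?thesis using True by (simp only: of_nat_mult of_nat_diff)
next
  case False then show ?thesis by (simp add: binomial_eq_0)
qed

lemma V_step_0: "V (Suc k) N 0 = V k N 0 * ((real k + 1/2) / (real N + real k + 1/2))"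
proof -
  define h where "h = real N + 1/2"
  have hp: "h > 0" unfolding h_def by simp
  define Q where "Q = pochhammer h (k+1)"
  have Qp: "Q > 0" unfolding Q_def using hp by (simp add: pochhammer_pos)
  define A where "A = real N + real k + 1/2"
  have Ap: "A > 0" unfolding A_def by simp
  define A1 where "A1 = A + 1"
  have A1p: "A1 > 0" unfolding A1_def using Ap by simp
  have q1: "pochhammer h (Suc k + 1) = Q * A1"
    unfolding Q_def A1_def A_def h_def using pochhammer_rec'[of "real N + 1/2" "k+1"] by (simp add: algebra_simps)
  have p2: "pochhammer (1/2::real) (Suc k) = pochhammer (1/2) k * (real k + 1/2)"
    using pochhammer_rec'[of "1/2::real" k] by (simp add: algebra_simps)
  have e1: "real N - real (0::nat) + 1/2 = h" unfolding h_def by simp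
  have e2: "real N + real (Suc k) - 2 * real (0::nat) + 1/2 = A1" unfolding A1_def A_def by simp
  have e3: "real N + real k - 2 * real (0::nat) + 1/2 = A" unfolding A_def by simp
  show ?thesis unfolding V_def e1 e2 e3 q1 p2 Q_def[symmetric] A_def[symmetric]
    using Qp Ap A1p by (simp add: field_simps)
qed

lemma V_step_Suc:
  assumes N: "2 * Suc j \<le> N"
  shows "V (Suc k) N (Suc j) = V k N (Suc j) * ((real k + 1/2) / (real (N - 2*Suc j) + real k + 1/2))
     - V k N j * ((real k + 1/2) / (real (N - 2*j) + real k + 1/2))"
proof -
  define h where "h = real N - real (Suc j) + 1/2"
  have hp: "h > 0" unfolding h_def using N by simp
  define Q where "Q = pochhammer h (k+1)"
  have Qp: "Q > 0" unfolding Q_def using hp by (simp add: pochhammer_pos)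
  define E where "E = h + real k + 1"
  have Ep: "E > 0" unfolding E_def using hp by simp
  define A where "A = real (N - 2*Suc j) + real k + 1/2"
  have Ap: "A > 0" unfolding A_def by simp
  define B where "B = A + 2"
  have Bp: "B > 0" unfolding B_def using Ap by simp
  define pk where "pk = pochhammer (1/2::real) k"
  define c0 where "c0 = real (k choose j)"
  define c1 where "c1 = real (k choose Suc j)"
  have q1: "pochhammer h (Suc k + 1) = Q * E"
    unfolding Q_def E_def using pochhammer_rec'[of h "k+1"] by (simp add: algebra_simps)
  have q2: "pochhammer (h + 1) (k + 1) = Q * E / h"
  proof -
    have "pochhammer h (Suc (k+1)) = h * pochhammer (h+1) (k+1)" by (rule pochhammer_rec)
    then show ?thesis using q1 hp by (simp add: field_simps)
  qed
  have p2: "pochhammer (1/2::real) (Suc k) = pk * (real k + 1/2)"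
    unfolding pk_def using pochhammer_rec'[of "1/2::real" k] by (simp add: algebra_simps)
  have r1: "real N - real j + 1/2 = h + 1" unfolding h_def by simp
  have r2: "real N - real (Suc j) + 1/2 = h" unfolding h_def ..
  have r3: "real N + real k - 2 * real (Suc j) + 1/2 = A" unfolding A_def using N by (simp add: of_nat_diff)
  have r4: "real (N - 2*j) + real k + 1/2 = B" unfolding B_def A_def using N by (simp add: of_nat_diff)
  have r5: "real N + real k - 2 * real j + 1/2 = B" unfolding B_def A_def using N by (simp add: of_nat_diff)
  have r6: "real N + real (Suc k) - 2 * real (Suc j) + 1/2 = E - real j - 1"
    unfolding E_def h_def by simp
  have cS: "real (Suc k choose Suc j) = c0 + c1" unfolding c0_def c1_def by simp
  have t1: "V k N (Suc j) * ((real k + 1/2) / A) = (-1)^(Suc j) * c1 * pk * (real k + 1/2) / Q"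
    unfolding V_def r2 r3 Q_def[symmetric] pk_def[symmetric] c1_def[symmetric]
    using Ap Qp by (simp add: field_simps)
  have t2: "V k N j * ((real k + 1/2) / B) = (-1)^j * c0 * pk * (real k + 1/2) * h / (Q * E)"
    unfolding V_def r1 r5 q2 pk_def[symmetric] c0_def[symmetric]
    using Bp Qp hp Ep by (simp add: field_simps)
  have t3: "V (Suc k) N (Suc j) = (-1)^(Suc j) * (c0 + c1) * pk * (real k + 1/2) * (E - real j - 1) / (Q * E)"
    unfolding V_def r2 r6 q1 p2 cS by simp
  have rel: "c1 * (real j + 1) = (real k - real j) * c0"
    unfolding c0_def c1_def using binom_rel[of j k] by (simp add: algebra_simps)
  have hE: "h = E - real k - 1" unfolding E_def by simp
  have "V k N (Suc j) * ((real k + 1/2) / A) - V k N j * ((real k + 1/2) / B)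
      = (-1)^(Suc j) * pk * (real k + 1/2) * (c1 * E + c0 * h) / (Q * E)"
    unfolding t1 t2 using Qp Ep by (simp add: field_simps)
  also have "c1 * E + c0 * h = (c0 + c1) * (E - real j - 1)"
    unfolding hE using rel by (simp add: algebra_simps)
  finally show ?thesis unfolding t3 A_def[symmetric] r4[symmetric] by (simp add: mult_ac)
qed



lemma lower_fun:
  assumes l: "l > 0"
  shows "poly (GP l m) x = l / (real m + l) * (poly (GP (l+1) m) x - (if 2 \<le> m then poly (GP (l+1) (m-2)) x else 0))"
proof -
  have "real m + l > 0" using l by simp
  then show ?thesis using GP_lower[of m l x] by (simp add: field_simps)
qed

lemma V_0_0: "V 0 N 0 = 1"
proof -
  have "real N + 1/2 > 0" by simp
  then show ?thesis by (simp add: V_def)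
qed

lemma V_out: "V k N (Suc k) = 0" by (simp add: V_def)

lemma conn: "poly (GP (1/2) N) x = (\<Sum>i\<le>k. if 2*i \<le> N then V k N i * poly (GP (real k + 1/2) (N - 2*i)) x else 0)"
proof (induction k)
  case 0 then show ?case by (simp add: V_0_0)
next
  case (Suc k)
  define l where "l = real k + 1/2"
  have lp: "l > 0" unfolding l_def by simp
  define a where "a = (\<lambda>m::nat. l / (real m + l))"
  define C' where "C' = (\<lambda>m. poly (GP (l+1) m) x)"
  define f where "f = (\<lambda>i. if 2*i \<le> N then V k N i * a (N - 2*i) * C' (N - 2*i) else 0)"
  define g where "g = (\<lambda>i. if 2*Suc i \<le> N then V k N i * a (N - 2*i) * C' (N - 2*Suc i) else 0)"
  have l1: "real (Suc k) + 1/2 = l + 1" unfolding l_def by simp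
  have IH: "poly (GP (1/2) N) x = (\<Sum>i\<le>k. f i - g i)"
    unfolding Suc.IH l_def[symmetric]
  proof (rule sum.cong)
    fix i assume "i \<in> {..k}"
    show "(if 2*i \<le> N then V k N i * poly (GP l (N - 2*i)) x else 0) = f i - g i"
    proof (cases "2*i \<le> N")
      case True
      have e: "(2 \<le> N - 2*i) = (2*Suc i \<le> N)" "N - 2*i - 2 = N - 2*Suc i" by auto
      have lw: "poly (GP l (N - 2*i)) x = a (N - 2*i) * (C' (N - 2*i) - (if 2*Suc i \<le> N then C' (N - 2*Suc i) else 0))"
        unfolding a_def C'_def using lower_fun[OF lp, of "N - 2*i" x] unfolding e .
      show ?thesis unfolding f_def g_def lw using True
        by (simp add: algebra_simps)
    qed (simp add: f_def g_def)
  qed simp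
  also have "\<dots> = (\<Sum>i\<le>Suc k. f i) - (\<Sum>i\<le>k. g i)"
    by (simp add: sum_subtractf f_def V_out)
  also have "\<dots> = f 0 + (\<Sum>i\<le>k. f (Suc i) - g i)"
    by (simp only: sum.atMost_Suc_shift[of f k] sum_subtractf)
  also have "\<dots> = (\<Sum>i\<le>Suc k. if 2*i \<le> N then V (Suc k) N i * poly (GP (real (Suc k) + 1/2) (N - 2*i)) x else 0)"
    unfolding sum.atMost_Suc_shift l1
  proof (intro arg_cong2[where f="(+)"] sum.cong refl)
    show "f 0 = (if 2*0 \<le> N then V (Suc k) N 0 * poly (GP (l+1) (N - 2*0)) x else 0)"
      unfolding f_def a_def C'_def l_def by (simp add: V_step_0 add_ac)
  next
    fix i assume "i \<in> {..k}"
    show "f (Suc i) - g i = (if 2*Suc i \<le> N then V (Suc k) N (Suc i) * poly (GP (l+1) (N - 2*Suc i)) x else 0)"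
    proof (cases "2*Suc i \<le> N")
      case True
      then show ?thesis unfolding f_def g_def a_def C'_def l_def
        by (simp add: V_step_Suc[OF True] algebra_simps add_ac del: mult_Suc_right)
    qed (simp add: f_def g_def)
  qed
  finally show ?case .
qed



lemma odd_dfact_poch: "odd_dfact k / 2^k = pochhammer (1/2) k"
proof (induction k)
  case 0 then show ?case by (simp add: odd_dfact_def)
next
  case (Suc k)
  have "odd_dfact (Suc k) = odd_dfact k * (2 * real (Suc k) - 1)"
    by (simp add: odd_dfact_def prod.nat_ivl_Suc')
  then have "odd_dfact (Suc k) / 2^Suc k = (odd_dfact k / 2^k) * (1/2 + real k)"
    by (simp add: field_simps)
  then show ?case using Suc.IH by (simp add: pochhammer_rec' add_ac)
qed

lemma GP_mu_at_1: "poly (GP (real k + 1/2) m) 1 = real ((2*k+m) choose m)"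
proof -
  have "poly (GP (real k + 1/2) m) 1 = pochhammer (2*(real k + 1/2)) m / fact m"
    by (rule GP_at_1) simp
  also have "\<dots> = pochhammer (real (2*k+m) - real m + 1) m / fact m" by (simp add: algebra_simps)
  also have "\<dots> = real (2*k+m) gchoose m" by (simp only: gbinomial_pochhammer')
  also have "\<dots> = real ((2*k+m) choose m)" by (simp add: binomial_gbinomial)
  finally show ?thesis .
qed

lemma GP_half_at_1: "poly (GP (1/2) m) 1 = 1"
  using GP_at_1[of "1/2" m] by (simp add: pochhammer_fact[symmetric])

lemma u_aux: "(M::real) > 0 \<Longrightarrow> P1 > 0 \<Longrightarrow> P2 > 0 \<Longrightarrow> (t::real) > 0 \<Longrightarrow>
  s * ob / t * c * B / (P1 * P2) = s * c * (ob / t) * M / (P1 * (M * P2)) * B"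
  by (simp add: field_simps)

lemma u_V: assumes "i \<le> k"
  shows "u_coeff i m k = V k (m + 2*i) i * real ((2*k+m) choose m)"
proof -
  have p: "pochhammer (real m + real i + 1/2) (k+1)
     = pochhammer (real m + real i + 1/2) (k - i) * ((real m + real k + 1/2) * pochhammer (real m + real k + 3/2) i)"
  proof -
    have "pochhammer (real m + real i + 1/2) ((k - i) + Suc i)
        = pochhammer (real m + real i + 1/2) (k - i) * pochhammer (real m + real i + 1/2 + real (k - i)) (Suc i)"
      by (rule pochhammer_product')
    moreover have "real m + real i + 1/2 + real (k - i) = real m + real k + 1/2" using assms by (simp add: of_nat_diff)
    moreover have "(k - i) + Suc i = k + 1" using assms by simp
    ultimately show ?thesis by (simp add: pochhammer_rec algebra_simps)
  qed
  have e1: "real (m + 2*i) - real i + 1/2 = real m + real i + 1/2" by simp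
  have e2: "real (m + 2*i) + real k - 2 * real i + 1/2 = real m + real k + 1/2" by simp
  have pos1: "pochhammer (real m + real i + 1/2) (k - i) > 0" by (intro pochhammer_pos) simp
  have pos2: "pochhammer (real m + real k + 3/2) i > 0" by (intro pochhammer_pos) simp
  have pos3: "real m + real k + 1/2 > 0" by simp
  show ?thesis unfolding u_coeff_def V_def e1 e2 p odd_dfact_poch[symmetric]
    using u_aux[OF pos3 pos1 pos2, of "2^k"] by simp
qed

lemma ng2: "norm_gegenbauer 2 n x = poly (GP (1/2) n) x"
  by (simp add: norm_gegenbauer_def gegenbauer_poly GP_half_at_1)

lemma ngd: "norm_gegenbauer (2*k+2) n x = poly (GP (real k + 1/2) n) x / poly (GP (real k + 1/2) n) 1"
proof -
  have "(real (2*k+2) - 1) / 2 = real k + 1/2" by simp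
  then show ?thesis by (simp only: norm_gegenbauer_def gegenbauer_poly)
qed

lemma conn_norm: "norm_gegenbauer 2 N x =
   (\<Sum>i\<le>k. if 2*i \<le> N then u_coeff i (N - 2*i) k * norm_gegenbauer (2*k+2) (N - 2*i) x else 0)"
  unfolding ng2 conn[of N x k]
proof (rule sum.cong)
  fix i assume i: "i \<in> {..k}"
  show "(if 2*i \<le> N then V k N i * poly (GP (real k + 1/2) (N - 2*i)) x else 0) =
    (if 2*i \<le> N then u_coeff i (N - 2*i) k * norm_gegenbauer (2*k+2) (N - 2*i) x else 0)"
  proof (cases "2*i \<le> N")
    case True
    have N: "N - 2*i + 2*i = N" using True by simp
    have pos: "real ((2*k + (N - 2*i)) choose (N - 2*i)) > 0" by simp
    show ?thesis using True i unfolding ngd u_V[OF i[simplified]] N GP_mu_at_1 using pos by simp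
  qed simp
qed simp



lemma series_int:
  fixes a :: "nat \<Rightarrow> real" and h :: "nat \<Rightarrow> real \<Rightarrow> real" and F g :: "real \<Rightarrow> real"
  assumes sums: "\<And>x. x \<in> {-1..1} \<Longrightarrow> (\<lambda>n. a n * h n x) sums F x"
    and nn: "\<And>n. a n \<ge> 0" and sa: "summable a"
    and hb: "\<And>n x. x \<in> {-1..1} \<Longrightarrow> \<bar>h n x\<bar> \<le> 1"
    and hc: "\<And>n. continuous_on {-1..1} (h n)"
    and Fc: "continuous_on {-1..1} F" and gc: "continuous_on {-1..1} g"
  shows "(\<lambda>n. a n * integral {-1..1} (\<lambda>x. h n x * g x)) sums integral {-1..1} (\<lambda>x. F x * g x)"
proof -
  define S where "S = (\<lambda>N x. \<Sum>n<N. a n * h n x)"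
  define T where "T = (\<lambda>N. suminf a - (\<Sum>i<N. a i))"
  obtain x0 where x0: "x0 \<in> {-1..1::real}" "\<forall>y\<in>{-1..1}. \<bar>g y\<bar> \<le> \<bar>g x0\<bar>"
  proof -
    have "continuous_on {-1..1::real} (\<lambda>x. \<bar>g x\<bar>)" using gc by (intro continuous_intros)
    then have "\<exists>x\<in>{-1..1::real}. \<forall>y\<in>{-1..1}. \<bar>g y\<bar> \<le> \<bar>g x\<bar>"
      by (intro continuous_attains_sup) auto
    then show ?thesis using that by blast
  qed
  define G where "G = \<bar>g x0\<bar>"
  have G: "\<And>y. y \<in> {-1..1} \<Longrightarrow> \<bar>g y\<bar> \<le> G" using x0 unfolding G_def by auto
  have Gnn: "G \<ge> 0" unfolding G_def by simp
  have Sc: "continuous_on {-1..1} (S N)" for N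
    unfolding S_def by (intro continuous_intros hc)
  have int_h: "(\<lambda>x. h n x * g x) integrable_on {-1..1}" for n
    by (intro integrable_continuous_real continuous_intros hc gc)
  have int_F: "(\<lambda>x. F x * g x) integrable_on {-1..1}"
    by (intro integrable_continuous_real continuous_intros Fc gc)
  have pt: "\<bar>F x - S N x\<bar> \<le> T N" if x: "x \<in> {-1..1}" for x N
  proof -
    have s1: "(\<lambda>i. a (i+N) * h (i+N) x) sums (F x - S N x)"
      unfolding S_def using sums_split_initial_segment[OF sums[OF x]] .
    have s2: "(\<lambda>i. a (i+N)) sums T N"
      unfolding T_def using sums_split_initial_segment[OF summable_sums[OF sa]] .
    have b: "\<bar>a (i+N) * h (i+N) x\<bar> \<le> a (i+N)" for i
      using hb[OF x, of "i+N"] nn[of "i+N"] by (simp add: abs_mult mult_left_le)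
    have "F x - S N x \<le> T N"
      by (rule sums_le[OF _ s1 s2]) (use b in \<open>simp add: abs_le_iff\<close>)
    moreover have "- T N \<le> F x - S N x"
    proof (rule sums_le[OF _ sums_minus[OF s2] s1])
      fix i show "- a (i + N) \<le> a (i + N) * h (i + N) x" using b[of i] by (simp add: abs_le_iff)
    qed
    ultimately show ?thesis by simp
  qed
  have eq: "(\<Sum>n<N. a n * integral {-1..1} (\<lambda>x. h n x * g x)) = integral {-1..1} (\<lambda>x. S N x * g x)" for N
  proof -
    have "integral {-1..1} (\<lambda>x. S N x * g x) = integral {-1..1} (\<lambda>x. \<Sum>n<N. a n * (h n x * g x))"
      unfolding S_def by (simp add: sum_distrib_right mult.assoc)
    also have "\<dots> = (\<Sum>n<N. integral {-1..1} (\<lambda>x. a n * (h n x * g x)))"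
      by (rule integral_sum) (auto intro!: integrable_continuous_real continuous_intros hc gc)
    also have "\<dots> = (\<Sum>n<N. a n * integral {-1..1} (\<lambda>x. h n x * g x))"
      by (simp add: integral_mult_right)
    finally show ?thesis by simp
  qed
  have T0: "T \<longlonglongrightarrow> 0"
    unfolding T_def using tendsto_diff[OF tendsto_const summable_LIMSEQ[OF sa], of "suminf a"] by simp
  have bnd: "norm (integral {-1..1} (\<lambda>x. F x * g x) - integral {-1..1} (\<lambda>x. S N x * g x)) \<le> T N * G * 2" for N
  proof -
    have "integral {-1..1} (\<lambda>x. F x * g x) - integral {-1..1} (\<lambda>x. S N x * g x) = integral {-1..1} (\<lambda>x. (F x - S N x) * g x)"
      by (subst integral_diff[symmetric]) (auto simp: algebra_simps intro: int_F integrable_continuous_real continuous_intros Sc gc)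
    also have "norm \<dots> \<le> (T N * G) * (1 - (-1))"
    proof (rule integral_bound)
      show "continuous_on {-1..1} (\<lambda>x. (F x - S N x) * g x)" by (intro continuous_intros Fc Sc gc)
      fix t :: real assume t: "t \<in> {-1..1}"
      have "\<bar>F t - S N t\<bar> * \<bar>g t\<bar> \<le> T N * G"
        by (rule mult_mono) (use pt[OF t, of N] G[OF t] Gnn in auto)
      then show "norm ((F t - S N t) * g t) \<le> T N * G" by (simp add: abs_mult)
    qed simp
    finally show ?thesis by simp
  qed
  have "(\<lambda>N. integral {-1..1} (\<lambda>x. F x * g x) - integral {-1..1} (\<lambda>x. S N x * g x)) \<longlonglongrightarrow> 0"
  proof (rule Lim_null_comparison)
    show "\<forall>\<^sub>F N in sequentially. norm (integral {-1..1} (\<lambda>x. F x * g x) - integral {-1..1} (\<lambda>x. S N x * g x)) \<le> T N * G * 2"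
      using bnd by simp
    show "(\<lambda>N. T N * G * 2) \<longlonglongrightarrow> 0" using tendsto_mult_left_zero[OF tendsto_mult_left_zero[OF T0, of G], of 2] by simp
  qed
  then have "(\<lambda>N. integral {-1..1} (\<lambda>x. S N x * g x)) \<longlonglongrightarrow> integral {-1..1} (\<lambda>x. F x * g x)"
    using tendsto_diff[OF tendsto_const[of "integral {-1..1} (\<lambda>x. F x * g x)"]] by fastforce
  then show ?thesis unfolding sums_def eq .
qed



lemma ngd_bound: "x \<in> {-1..1} \<Longrightarrow> \<bar>norm_gegenbauer (2*k+2) n x\<bar> \<le> 1"
proof -
  assume x: "x \<in> {-1..1}"
  have p: "poly (GP (real k + 1/2) n) 1 > 0" by (rule GP_at_1_pos) simp
  have "\<bar>poly (GP (real k + 1/2) n) x\<bar> \<le> poly (GP (real k + 1/2) n) 1" by (rule GP_bound) (use x in auto)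
  then show ?thesis unfolding ngd using p by (simp add: abs_div divide_le_eq_1)
qed

lemma ng2_bound: "x \<in> {-1..1} \<Longrightarrow> \<bar>norm_gegenbauer 2 n x\<bar> \<le> 1"
proof -
  assume x: "x \<in> {-1..1}"
  have "\<bar>poly (GP (1/2) n) x\<bar> \<le> poly (GP (1/2) n) 1" by (rule GP_bound) (use x in auto)
  then show ?thesis unfolding ng2 GP_half_at_1 .
qed

lemma ngd_cont: "continuous_on {-1..1} (norm_gegenbauer (2*k+2) n)"
proof -
  have "poly (GP (real k + 1/2) n) 1 > 0" by (rule GP_at_1_pos) simp
  then show ?thesis unfolding ngd by (intro continuous_intros) auto
qed

lemma ng2_cont: "continuous_on {-1..1} (norm_gegenbauer 2 n)"
  unfolding ng2 by (intro continuous_intros)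

lemma theorem2_aux:
  fixes k :: nat and \<psi> :: "real \<Rightarrow> real" and b2 bd :: "nat \<Rightarrow> real"
  assumes "\<psi> \<in> Psi (2*k+2)"
    and s2: "schoenberg_coeffs 2 \<psi> b2"
    and sd: "schoenberg_coeffs (2*k+2) \<psi> bd"
  shows "bd M = (\<Sum>i\<le>k. u_coeff i M k * b2 (M + 2*i))"
proof -
  have psic: "continuous_on {0..pi} \<psi>" using assms(1) by (simp add: Psi_def)
  define F where "F = (\<lambda>x. \<psi> (arccos x))"
  have Fc: "continuous_on {-1..1} F" unfolding F_def
    by (rule continuous_on_compose2[OF psic continuous_on_arccos']) (auto simp: arccos_bounded)
  define Ch where "Ch = norm_gegenbauer (2*k+2)"
  define g where "g = (\<lambda>x::real. (1 - x^2)^k * Ch M x)"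
  have gc: "continuous_on {-1..1} g" unfolding g_def Ch_def by (intro continuous_intros ngd_cont)
  define I where "I = (\<lambda>n. integral {-1..1} (\<lambda>x. Ch n x * g x))"
  define c where "c = (\<lambda>n. poly (GP (real k + 1/2) n) 1)"
  have cp: "c n > 0" for n unfolding c_def by (rule GP_at_1_pos) simp
  define NM where "NM = I M"
  have Iform: "I n = inverse (c n * c M) * integral {-1..1} (\<lambda>x. (1 - x^2)^k * poly (GP (real k + 1/2) n) x * poly (GP (real k + 1/2) M) x)" for n
  proof -
    have "(\<lambda>x. Ch n x * g x) = (\<lambda>x. inverse (c n * c M) * ((1 - x^2)^k * poly (GP (real k + 1/2) n) x * poly (GP (real k + 1/2) M) x))"
      unfolding Ch_def g_def ngd c_def by (auto simp: field_simps)
    then show ?thesis unfolding I_def by simp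
  qed
  have I_ne: "n \<noteq> M \<Longrightarrow> I n = 0" for n
    unfolding Iform using GP_orth[of n M k] by (simp add: integral_unique)
  have NM_nz: "NM \<noteq> 0"
    unfolding NM_def Iform using GP_norm_nz[of "real k + 1/2" k M] cp[of M] by simp
  have I_eq: "I n = (if n = M then NM else 0)" for n using I_ne NM_def by auto
  have sums_pt: "\<And>x. x \<in> {-1..1} \<Longrightarrow> (\<lambda>n. b n * norm_gegenbauer d n x) sums F x"
    if sc: "schoenberg_coeffs d \<psi> b" for d b
  proof -
    fix x :: real assume x: "x \<in> {-1..1}"
    have "arccos x \<in> {0..pi}" using x by (auto simp: arccos_bounded)
    then have "(\<lambda>n. b n * norm_gegenbauer d n (cos (arccos x))) sums \<psi> (arccos x)"
      using sc unfolding schoenberg_coeffs_def by blast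
    then show "(\<lambda>n. b n * norm_gegenbauer d n x) sums F x" using x unfolding F_def by simp
  qed
  have nn2: "\<And>n. b2 n \<ge> 0" and su2: "summable b2" using s2 unfolding schoenberg_coeffs_def by (auto simp: sums_iff)
  have nnd: "\<And>n. bd n \<ge> 0" and sud: "summable bd" using sd unfolding schoenberg_coeffs_def by (auto simp: sums_iff)
  define J where "J = integral {-1..1} (\<lambda>x. F x * g x)"
  have Sd: "(\<lambda>n. bd n * I n) sums J"
    unfolding I_def J_def Ch_def
    by (rule series_int[OF sums_pt[OF sd] nnd sud ngd_bound ngd_cont Fc gc])
  have "(\<lambda>n. bd n * I n) = (\<lambda>n. if n = M then bd M * NM else 0)" unfolding I_eq by auto
  then have "(\<lambda>n. bd n * I n) sums (bd M * NM)" using sums_single[of M "\<lambda>_. bd M * NM"] by simp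
  then have Jd: "J = bd M * NM" using Sd sums_unique2 by blast
  define I2 where "I2 = (\<lambda>n. integral {-1..1} (\<lambda>x. norm_gegenbauer 2 n x * g x))"
  have S2: "(\<lambda>n. b2 n * I2 n) sums J"
    unfolding I2_def J_def
    by (rule series_int[OF sums_pt[OF s2] nn2 su2 ng2_bound ng2_cont Fc gc])
  have I2_eq: "I2 n = (\<Sum>i\<le>k. if n = M + 2*i then u_coeff i M k * NM else 0)" for n
  proof -
    have "I2 n = integral {-1..1} (\<lambda>x. \<Sum>i\<le>k. (if 2*i \<le> n then u_coeff i (n - 2*i) k * Ch (n - 2*i) x else 0) * g x)"
      unfolding I2_def conn_norm[of n _ k] Ch_def by (simp add: sum_distrib_right)
    also have "\<dots> = (\<Sum>i\<le>k. integral {-1..1} (\<lambda>x. (if 2*i \<le> n then u_coeff i (n - 2*i) k * Ch (n - 2*i) x else 0) * g x))"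
    proof (rule integral_sum)
      fix i assume "i \<in> {..k}"
      show "(\<lambda>x. (if 2*i \<le> n then u_coeff i (n - 2*i) k * Ch (n - 2*i) x else 0) * g x) integrable_on {-1..1}"
      proof (cases "2*i \<le> n")
        case True
        have "(\<lambda>x. (if 2*i \<le> n then u_coeff i (n - 2*i) k * Ch (n - 2*i) x else 0) * g x)
            = (\<lambda>x. u_coeff i (n - 2*i) k * Ch (n - 2*i) x * g x)" using True by simp
        then show ?thesis unfolding Ch_def
          by (simp only:) (intro integrable_continuous_real continuous_intros ngd_cont gc)
      qed (simp add: integrable_0)
    qed simp
    also have "\<dots> = (\<Sum>i\<le>k. if n = M + 2*i then u_coeff i M k * NM else 0)"
    proof (rule sum.cong)
      fix i assume "i \<in> {..k}"
      show "integral {-1..1} (\<lambda>x. (if 2*i \<le> n then u_coeff i (n - 2*i) k * Ch (n - 2*i) x else 0) * g x)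
          = (if n = M + 2*i then u_coeff i M k * NM else 0)"
      proof (cases "2*i \<le> n")
        case True
        have "integral {-1..1} (\<lambda>x. (if 2*i \<le> n then u_coeff i (n - 2*i) k * Ch (n - 2*i) x else 0) * g x)
            = u_coeff i (n - 2*i) k * I (n - 2*i)"
          using True unfolding I_def by (simp add: mult.assoc)
        also have "\<dots> = (if n = M + 2*i then u_coeff i M k * NM else 0)"
          unfolding I_eq using True by auto
        finally show ?thesis .
      qed auto
    qed simp
    finally show ?thesis .
  qed
  have eqf: "(\<lambda>n. b2 n * I2 n) = (\<lambda>n. \<Sum>i\<le>k. if n = M + 2*i then b2 (M + 2*i) * (u_coeff i M k * NM) else 0)"
    unfolding I2_eq by (auto simp: sum_distrib_left intro!: sum.cong)
  have sm: "(\<lambda>n. \<Sum>i\<le>k. if n = M + 2*i then b2 (M + 2*i) * (u_coeff i M k * NM) else 0)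
      sums (\<Sum>i\<le>k. b2 (M + 2*i) * (u_coeff i M k * NM))"
    by (rule sums_sum) (rule sums_single)
  have "(\<lambda>n. b2 n * I2 n) sums (\<Sum>i\<le>k. b2 (M + 2*i) * (u_coeff i M k * NM))"
    unfolding eqf by (rule sm)
  then have "J = (\<Sum>i\<le>k. b2 (M + 2*i) * (u_coeff i M k * NM))" by (rule sums_unique2[OF S2])
  moreover have "(\<Sum>i\<le>k. b2 (M + 2*i) * (u_coeff i M k * NM)) = (\<Sum>i\<le>k. u_coeff i M k * b2 (M + 2*i)) * NM"
    by (subst sum_distrib_right) (simp add: mult_ac)
  ultimately have "bd M * NM = (\<Sum>i\<le>k. u_coeff i M k * b2 (M + 2*i)) * NM"
    unfolding Jd by simp
  then show ?thesis using NM_nz by (metis mult_cancel_right)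
qed

theorem theorem2:
  fixes k :: nat and \<psi> :: "real \<Rightarrow> real" and b2 bd :: "nat \<Rightarrow> real"
  assumes "k \<ge> 1"
    and "\<psi> \<in> Psi (2*k+2)"
    and "schoenberg_coeffs 2 \<psi> b2"
    and "schoenberg_coeffs (2*k+2) \<psi> bd"
  shows "\<forall>n. bd n = (\<Sum>i\<le>k. u_coeff i n k * b2 (n + 2*i))"
  using theorem2_aux[OF assms(2-4)] by blast


end
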